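(* Consider problem (P): $\min_{{\bf x}\in\mathbb{R}^n} f({\bf x})+\lambda\|(A{\bf x}+{\bf b})_+\|_0$. For ${\bf x}^*\in\mathbb{R}^n$ let $\Gamma_*:=\{i: A_i{\bf x}^*+b_i=0\}$. (i) If ${\bf x}^*$ is a local minimizer of (P) and $A_{\Gamma_*}$ has full row rank, then $$-\nabla f({\bf x}^* )\in A^\top\,\partial\|(A{\bf x}^*+{\bf b})_+\|_0 .\qquad (\ast)$$ (ii) If ${\bf x}^*$ satisfies $(\ast)$ and $f$ is convex on some neighbourhood of ${\bf x}^*$, then ${\bf x}^*$ is a local minimizer of (P).
   Context: Standing setting: $f:\mathbb{R}^n\to\mathbb{R}$ is twice continuously differentiable, $\lambda>0$, $A\in\mathbb{R}^{m\times n}$ with rows $A_1,\dots,A_m$, ${\bf b}\in\mathbb{R}^m$. For ${\bf z}\in\mathbb{R}^m$, ${\bf z}_+$ is the componentwise positive part $\max\{z_i,0\}$ and $\|{\bf z}\|_0$ the number of nonzero entries. For $\Gamma\subseteq\{1,\dots,m\}$, $A_\Gamma$ is the submatrix of rows indexed by $\Gamma$. $\partial\|{\bf y}_+\|_0$ is the limiting subdifferential of ${\bf y}\mapsto\|{\bf y}_+\|_0$ at ${\bf y}$, which equals $\{{\bf v}\in\mathbb{R}^m: v_i\ge 0 \text{ if } y_i=0,\ v_i=0 \text{ if } y_i\neq0\}$. *)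

theory Defs
  imports "HOL-Analysis.Analysis"
begin

definition gradient :: "(real^'n \<Rightarrow> real) \<Rightarrow> real^'n \<Rightarrow> real^'n" where
  "gradient f x = (THE g. (f has_derivative (\<lambda>h. g \<bullet> h)) (at x))"

definition twice_cont_diff :: "(real^'n \<Rightarrow> real) \<Rightarrow> bool" where
  "twice_cont_diff f \<longleftrightarrow> (\<forall>x. f differentiable (at x)) \<and>
     (\<exists>H :: real^'n \<Rightarrow> ((real^'n) \<Rightarrow>\<^sub>L (real^'n)).
        (\<forall>x. (gradient f has_derivative blinfun_apply (H x)) (at x)) \<and> continuous_on UNIV H)"

definition pos_part :: "real^'m \<Rightarrow> real^'m" where
  "pos_part z = (\<chi> i. max (z $ i) 0)"

definition l0norm :: "real^'m \<Rightarrow> nat" where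
  "l0norm z = card {i. z $ i \<noteq> 0}"

definition objP :: "(real^'n \<Rightarrow> real) \<Rightarrow> real \<Rightarrow> real^'n^'m \<Rightarrow> real^'m \<Rightarrow> real^'n \<Rightarrow> real" where
  "objP f lam A b x = f x + lam * real (l0norm (pos_part (A *v x + b)))"

definition local_minimizer :: "(real^'n \<Rightarrow> real) \<Rightarrow> real^'n \<Rightarrow> bool" where
  "local_minimizer F x \<longleftrightarrow> (\<exists>e>0. \<forall>y. dist y x < e \<longrightarrow> F x \<le> F y)"

text \<open>Limiting subdifferential of y \<mapsto> ||y_+||_0 at y, in the explicit form given in the paper.\<close>
definition subdiff_l0pos :: "real^'m \<Rightarrow> (real^'m) set" where
  "subdiff_l0pos y = {v. \<forall>i. (y $ i = 0 \<longrightarrow> v $ i \<ge> 0) \<and> (y $ i \<noteq> 0 \<longrightarrow> v $ i = 0)}"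

definition active_set :: "real^'n^'m \<Rightarrow> real^'m \<Rightarrow> real^'n \<Rightarrow> 'm set" where
  "active_set A b x = {i. A $ i \<bullet> x + b $ i = 0}"

definition full_row_rank :: "real^'n^'m \<Rightarrow> 'm set \<Rightarrow> bool" where
  "full_row_rank A \<Gamma> \<longleftrightarrow> inj_on (\<lambda>i. A $ i) \<Gamma> \<and> independent ((\<lambda>i. A $ i) ` \<Gamma>)"

end

theory Submission
  imports Defs
begin


lemma transpose_mv_sum: "transpose (A::real^'n^'m) *v v = (\<Sum>i\<in>UNIV. v$i *\<^sub>R A$i)"
  by (simp add: vec_eq_iff matrix_vector_mult_def transpose_def mult.commute)

lemma transpose_mv_inner: "(transpose (A::real^'n^'m) *v v) \<bullet> h = v \<bullet> (A *v h)"
  unfolding transpose_mv_sum by (simp add: inner_sum_left matrix_vector_mul_component inner_vec_def[of v])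

lemma gradient_works:
  assumes "f differentiable (at x)"
  shows "(f has_derivative (\<lambda>h. gradient f x \<bullet> h)) (at x)"
proof -
  obtain F where F: "(f has_derivative F) (at x)" using assms differentiable_def by blast
  have lin: "linear F" using F has_derivative_linear by blast
  define g where "g = adjoint F 1"
  have Fg: "F = (\<lambda>h. g \<bullet> h)"
    using adjoint_works[OF lin, of _ 1] by (auto simp: g_def inner_commute fun_eq_iff)
  have "\<exists>!g. (f has_derivative (\<lambda>h. g \<bullet> h)) (at x)"
  proof
    show "(f has_derivative (\<lambda>h. g \<bullet> h)) (at x)" using F Fg by simp
  next
    fix g' assume "(f has_derivative (\<lambda>h. g' \<bullet> h)) (at x)"
    then have "(\<lambda>h. g' \<bullet> h) = (\<lambda>h. g \<bullet> h)" using F Fg has_derivative_unique by blast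
    then have "g' \<bullet> (g' - g) = g \<bullet> (g' - g)" by metis
    then have "(g' - g) \<bullet> (g' - g) = 0" by (simp add: inner_diff_left)
    then show "g' = g" by simp
  qed
  then show ?thesis unfolding gradient_def by (rule theI')
qed


lemma l0_pos: "l0norm (pos_part z) = card {i. z$i > 0}"
  unfolding l0norm_def pos_part_def
  by (rule arg_cong[where f=card]) (auto simp: max_def)

lemma Ycomp: "(A *v x + b) $ i = A$i \<bullet> x + b$i"
  by (simp add: matrix_vector_mul_component)

lemma convex_grad_ineq:
  fixes f :: "real^'n \<Rightarrow> real"
  assumes der: "(f has_derivative (\<lambda>h. g \<bullet> h)) (at x)"
    and cvx: "convex_on (ball x d) f" and z: "z \<in> ball x d"
  shows "f z \<ge> f x + g \<bullet> (z - x)"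
proof (rule ccontr)
  assume "\<not> ?thesis"
  then have lt: "g \<bullet> (z - x) - (f z - f x) > 0" by simp
  define w where "w = z - x"
  have d1: "((\<lambda>t::real. x + t *\<^sub>R w) has_derivative (\<lambda>t. t *\<^sub>R w)) (at 0)"
    by (auto intro!: derivative_eq_intros)
  have d2: "(f has_derivative (\<lambda>h. g \<bullet> h)) (at ((\<lambda>t::real. x + t *\<^sub>R w) 0))"
    using der by simp
  have "((f \<circ> (\<lambda>t::real. x + t *\<^sub>R w)) has_derivative ((\<lambda>h. g \<bullet> h) \<circ> (\<lambda>t. t *\<^sub>R w))) (at 0)"
    by (rule diff_chain_at[OF d1 d2])
  then have "((\<lambda>t. f (x + t *\<^sub>R w)) has_derivative (\<lambda>t. t * (g \<bullet> w))) (at 0)"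
    by (simp add: o_def)
  then have "((\<lambda>t. f (x + t *\<^sub>R w)) has_real_derivative (g \<bullet> w)) (at 0)"
    unfolding has_field_derivative_def
    by (rule has_derivative_eq_rhs) (auto simp: fun_eq_iff o_def)
  then have "((\<lambda>t. f (x + t *\<^sub>R w) - t * (f z - f x)) has_real_derivative (g \<bullet> w - (f z - f x))) (at 0)"
    by (auto intro!: derivative_eq_intros)
  from has_real_derivative_pos_inc_right[OF this] lt w_def
  obtain e where e: "e > 0" "\<And>h. h > 0 \<Longrightarrow> h < e \<Longrightarrow>
      f (x + (0 + h) *\<^sub>R w) - (0 + h) * (f z - f x) > f (x + 0 *\<^sub>R w) - 0 * (f z - f x)"
    by fastforce
  have "0 < d" using z by (metis mem_ball zero_le_dist le_less_trans)
  define h where "h = min (e/2) 1"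
  have h: "h > 0" "h < e" "h \<le> 1" using e by (auto simp: h_def)
  have "f (x + h *\<^sub>R w) - h * (f z - f x) > f x" using e(2)[OF h(1,2)] by simp
  moreover have "f ((1 - h) *\<^sub>R x + h *\<^sub>R z) \<le> (1 - h) * f x + h * f z"
    using convex_onD[OF cvx, of h x z] h z \<open>0 < d\<close> by (auto simp: less_imp_le)
  moreover have "(1 - h) *\<^sub>R x + h *\<^sub>R z = x + h *\<^sub>R w"
    by (simp add: w_def algebra_simps)
  ultimately show False by (simp add: algebra_simps)
qed


lemma part2:
  fixes f :: "real^'n \<Rightarrow> real" and A :: "real^'n^'m"
  assumes diff: "\<forall>x. f differentiable (at x)" and lam: "lam > 0"
    and v: "v \<in> subdiff_l0pos (A *v xs + b)" and gv: "- gradient f xs = transpose A *v v"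
    and d: "d > 0" and cvx: "convex_on (ball xs d) f"
  shows "local_minimizer (objP f lam A b) xs"
proof -
  define g where "g = gradient f xs"
  define Y where "Y = (\<lambda>z. A *v z + b)"
  have der: "(f has_derivative (\<lambda>h. g \<bullet> h)) (at xs)"
    unfolding g_def using gradient_works diff by blast
  have "isCont f xs" using diff differentiable_imp_continuous_within by blast
  then have "(f \<longlongrightarrow> f xs) (nhds xs)" by (simp add: isCont_def tendsto_at_iff_tendsto_nhds)
  then have E2: "eventually (\<lambda>z. f z > f xs - lam) (nhds xs)"
    using lam by (intro order_tendstoD(1)) auto
  have Ycont: "((\<lambda>z. Y z $ i) \<longlongrightarrow> Y xs $ i) (nhds xs)" for i
  proof -
    have "isCont (\<lambda>z. A$i \<bullet> z + b$i) xs" by (intro continuous_intros)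
    then have "((\<lambda>z. A$i \<bullet> z + b$i) \<longlongrightarrow> A$i \<bullet> xs + b$i) (nhds xs)"
      by (metis isCont_def tendsto_at_iff_tendsto_nhds)
    then show ?thesis by (simp add: Y_def matrix_vector_mul_component)
  qed
  have E3: "eventually (\<lambda>z. \<forall>i. (Y xs $ i > 0 \<longrightarrow> Y z $ i > 0) \<and> (Y xs $ i < 0 \<longrightarrow> Y z $ i < 0)) (nhds xs)"
  proof (rule eventually_all_finite)
    fix i
    show "eventually (\<lambda>z. (Y xs $ i > 0 \<longrightarrow> Y z $ i > 0) \<and> (Y xs $ i < 0 \<longrightarrow> Y z $ i < 0)) (nhds xs)"
    proof (cases "Y xs $ i > 0")
      case True
      then show ?thesis using order_tendstoD(1)[OF Ycont[of i], of 0] by (auto elim: eventually_mono)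
    next
      case False
      then show ?thesis using order_tendstoD(2)[OF Ycont[of i], of 0]
        by (cases "Y xs $ i < 0") (auto elim: eventually_mono)
    qed
  qed
  have E1: "eventually (\<lambda>z. dist z xs < d) (nhds xs)"
    using d by (auto simp: eventually_nhds_metric)
  from eventually_conj[OF E1 eventually_conj[OF E2 E3]]
  obtain e where e: "e > 0" and P: "\<And>z. dist z xs < e \<Longrightarrow> dist z xs < d \<and> f z > f xs - lam \<and>
      (\<forall>i. (Y xs $ i > 0 \<longrightarrow> Y z $ i > 0) \<and> (Y xs $ i < 0 \<longrightarrow> Y z $ i < 0))"
    unfolding eventually_nhds_metric by blast
  have obj: "objP f lam A b z = f z + lam * real (card {i. Y z $ i > 0})" for z
    by (simp add: objP_def l0_pos Y_def)
  show ?thesis unfolding local_minimizer_def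
  proof (intro exI[of _ e] conjI allI impI e)
    fix z assume dz: "dist z xs < e"
    note Pz = P[OF dz]
    have sub: "{i. Y xs $ i > 0} \<subseteq> {i. Y z $ i > 0}" using Pz by auto
    show "objP f lam A b xs \<le> objP f lam A b z"
    proof (cases "\<exists>i. Y xs $ i = 0 \<and> Y z $ i > 0")
      case True
      then obtain i where i: "Y xs $ i = 0" "Y z $ i > 0" by blast
      have "i \<in> {i. Y z $ i > 0}" "i \<notin> {i. Y xs $ i > 0}" using i by auto
      then have "{i. Y xs $ i > 0} \<subset> {i. Y z $ i > 0}" using sub by blast
      then have "card {i. Y xs $ i > 0} < card {i. Y z $ i > 0}"
        by (intro psubset_card_mono) auto
      then have "real (card {i. Y xs $ i > 0}) + 1 \<le> real (card {i. Y z $ i > 0})" by linarith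
      then have "lam * (real (card {i. Y xs $ i > 0}) + 1) \<le> lam * real (card {i. Y z $ i > 0})"
        using lam by (intro mult_left_mono) auto
      then show ?thesis using Pz by (simp add: obj algebra_simps)
    next
      case False
      have zb: "z \<in> ball xs d" using Pz by (simp add: dist_commute)
      have fz: "f z \<ge> f xs + g \<bullet> (z - xs)" by (rule convex_grad_ineq[OF der cvx zb])
      have gz: "g \<bullet> (z - xs) = - (v \<bullet> (A *v (z - xs)))"
        using gv transpose_mv_inner[of A v "z - xs"] unfolding g_def
        by (metis inner_minus_left minus_minus)
      have AY: "A *v (z - xs) = Y z - Y xs" by (simp add: Y_def matrix_vector_mult_diff_distrib)
      have "v \<bullet> (Y z - Y xs) = (\<Sum>i\<in>UNIV. v$i * (Y z $ i - Y xs $ i))"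
        by (simp add: inner_vec_def)
      also have "\<dots> \<le> 0"
      proof (rule sum_nonpos)
        fix i
        show "v$i * (Y z $ i - Y xs $ i) \<le> 0"
        proof (cases "Y xs $ i = 0")
          case True
          then have "v$i \<ge> 0" using v by (simp add: subdiff_l0pos_def Y_def)
          moreover have "Y z $ i \<le> 0" using False True by auto
          ultimately show ?thesis using True by (simp add: mult_nonneg_nonpos)
        next
          case False
          then have "v$i = 0" using v by (simp add: subdiff_l0pos_def Y_def)
          then show ?thesis by simp
        qed
      qed
      finally have "f z \<ge> f xs" using fz gz unfolding AY by linarith
      moreover have "lam * real (card {i. Y xs $ i > 0}) \<le> lam * real (card {i. Y z $ i > 0})"
        using lam sub by (intro mult_left_mono) (auto intro: card_mono)
      ultimately show ?thesis by (simp add: obj)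
    qed
  qed
qed


lemma part1_cone:
  fixes f :: "real^'n \<Rightarrow> real" and A :: "real^'n^'m"
  assumes der: "(f has_derivative (\<lambda>h. g \<bullet> h)) (at xs)"
    and lm: "local_minimizer (objP f lam A b) xs" and lam: "lam > 0"
    and w: "\<And>i. (A *v xs + b) $ i = 0 \<Longrightarrow> A$i \<bullet> w \<le> 0"
  shows "g \<bullet> w \<ge> 0"
proof (rule ccontr)
  assume "\<not> ?thesis"
  then have neg: "g \<bullet> w < 0" by simp
  define Y where "Y = (\<lambda>z. A *v z + b)"
  have YL: "Y (xs + t *\<^sub>R w) $ i = Y xs $ i + t * (A$i \<bullet> w)" for t i
    by (simp add: Y_def matrix_vector_mul_component inner_add_right)
  obtain e where e: "e > 0" "\<And>y. dist y xs < e \<Longrightarrow> objP f lam A b xs \<le> objP f lam A b y"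
    using lm unfolding local_minimizer_def by blast
  have d1: "((\<lambda>t::real. xs + t *\<^sub>R w) has_derivative (\<lambda>t. t *\<^sub>R w)) (at 0)"
    by (auto intro!: derivative_eq_intros)
  have d2: "(f has_derivative (\<lambda>h. g \<bullet> h)) (at ((\<lambda>t::real. xs + t *\<^sub>R w) 0))"
    using der by simp
  have "((f \<circ> (\<lambda>t::real. xs + t *\<^sub>R w)) has_derivative ((\<lambda>h. g \<bullet> h) \<circ> (\<lambda>t. t *\<^sub>R w))) (at 0)"
    by (rule diff_chain_at[OF d1 d2])
  then have "((\<lambda>t. f (xs + t *\<^sub>R w)) has_derivative (\<lambda>t. t * (g \<bullet> w))) (at 0)"
    by (simp add: o_def)
  then have "((\<lambda>t. f (xs + t *\<^sub>R w)) has_real_derivative (g \<bullet> w)) (at 0)"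
    unfolding has_field_derivative_def
    by (rule has_derivative_eq_rhs) (auto simp: fun_eq_iff o_def)
  from has_real_derivative_neg_dec_right[OF this neg]
  obtain d where d: "d > 0" "\<And>h. h > 0 \<Longrightarrow> h < d \<Longrightarrow> f (xs + h *\<^sub>R w) < f xs"
    by fastforce
  have T: "((\<lambda>t. Y xs $ i + t * (A$i \<bullet> w)) \<longlongrightarrow> Y xs $ i) (at_right 0)" for i
  proof -
    have "((\<lambda>t. Y xs $ i + t * (A$i \<bullet> w)) \<longlongrightarrow> Y xs $ i + 0 * (A$i \<bullet> w)) (at_right 0)"
      by (intro tendsto_intros)
    then show ?thesis by simp
  qed
  have E1: "eventually (\<lambda>t. \<forall>i. Y xs $ i < 0 \<longrightarrow> Y xs $ i + t * (A$i \<bullet> w) < 0) (at_right (0::real))"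
  proof (rule eventually_all_finite)
    fix i
    show "eventually (\<lambda>t. Y xs $ i < 0 \<longrightarrow> Y xs $ i + t * (A$i \<bullet> w) < 0) (at_right (0::real))"
    proof (cases "Y xs $ i < 0")
      case True
      then show ?thesis using order_tendstoD(2)[OF T[of i], of 0] by (auto elim: eventually_mono)
    qed auto
  qed
  have "((\<lambda>t. t * norm w) \<longlongrightarrow> 0 * norm w) (at_right (0::real))"
    by (intro tendsto_intros)
  then have E2: "eventually (\<lambda>t. t * norm w < e) (at_right (0::real))"
    using e(1) by (intro order_tendstoD(2)) auto
  have E3: "eventually (\<lambda>t. 0 < t \<and> t < d) (at_right (0::real))"
    using d(1) by (simp add: eventually_at_right_field) (metis)
  obtain t where t: "\<forall>i. Y xs $ i < 0 \<longrightarrow> Y xs $ i + t * (A$i \<bullet> w) < 0" "t * norm w < e" "0 < t" "t < d"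
    using eventually_happens[OF eventually_conj[OF E1 eventually_conj[OF E2 E3]]] by auto
  define y where "y = xs + t *\<^sub>R w"
  have dy: "dist y xs < e" using t by (simp add: y_def dist_norm)
  have sub: "{i. Y y $ i > 0} \<subseteq> {i. Y xs $ i > 0}"
  proof
    fix i assume "i \<in> {i. Y y $ i > 0}"
    then have pos: "Y xs $ i + t * (A$i \<bullet> w) > 0" by (simp add: y_def YL)
    show "i \<in> {i. Y xs $ i > 0}"
    proof (cases "Y xs $ i = 0")
      case True
      then have "A$i \<bullet> w \<le> 0" using w by (simp add: Y_def)
      then have "t * (A$i \<bullet> w) \<le> 0" using t(3) by (simp add: mult_nonneg_nonpos)
      then show ?thesis using pos True by simp
    next
      case False
      have "\<not> Y xs $ i < 0" using pos t(1) by force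
      then show ?thesis using False by simp
    qed
  qed
  have "real (card {i. Y y $ i > 0}) \<le> real (card {i. Y xs $ i > 0})"
    using sub by (simp add: card_mono)
  then have "lam * real (card {i. Y y $ i > 0}) \<le> lam * real (card {i. Y xs $ i > 0})"
    using lam by (intro mult_left_mono) auto
  moreover have "f y < f xs" using d(2) t by (simp add: y_def)
  ultimately have "objP f lam A b y < objP f lam A b xs"
    by (simp add: objP_def l0_pos Y_def)
  then show False using e(2)[OF dy] by simp
qed


lemma part1:
  fixes f :: "real^'n \<Rightarrow> real" and A :: "real^'n^'m"
  assumes der: "(f has_derivative (\<lambda>h. g \<bullet> h)) (at xs)"
    and lm: "local_minimizer (objP f lam A b) xs" and lam: "lam > 0"
    and fr: "full_row_rank A (active_set A b xs)"
  shows "- g \<in> (\<lambda>v. transpose A *v v) ` subdiff_l0pos (A *v xs + b)"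
proof -
  define \<Gamma> where "\<Gamma> = active_set A b xs"
  define Y where "Y = A *v xs + b"
  have G: "\<Gamma> = {i. Y $ i = 0}" by (simp add: \<Gamma>_def Y_def active_set_def matrix_vector_mul_component)
  have C: "g \<bullet> w \<ge> 0" if "\<And>i. i \<in> \<Gamma> \<Longrightarrow> A$i \<bullet> w \<le> 0" for w
    using part1_cone[OF der lm lam, of w] that by (simp add: G Y_def)
  define R where "R = (\<lambda>i. A$i) ` \<Gamma>"
  have inj: "inj_on (\<lambda>i. A$i) \<Gamma>" and ind: "independent R"
    using fr by (simp_all add: full_row_rank_def R_def \<Gamma>_def)
  have C0: "g \<bullet> w = 0" if "\<And>i. i \<in> \<Gamma> \<Longrightarrow> A$i \<bullet> w = 0" for w
    using C[of w] C[of "-w"] that by fastforce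
  obtain p z where p: "p \<in> span R" and z: "\<And>u. u \<in> span R \<Longrightarrow> orthogonal z u" and gpz: "g = p + z"
    by (rule orthogonal_subspace_decomp_exists[of R g]) blast
  have "g \<bullet> z = 0"
  proof (rule C0)
    fix i assume "i \<in> \<Gamma>"
    then have "A$i \<in> span R" by (auto simp: R_def intro: span_base)
    then show "A$i \<bullet> z = 0" using z by (metis orthogonal_def inner_commute)
  qed
  moreover have "p \<bullet> z = 0" using z[OF p] by (metis orthogonal_def inner_commute)
  ultimately have "z \<bullet> z = 0" using gpz by (simp add: inner_add_left)
  then have "g \<in> span R" using gpz p by simp
  moreover have "finite R" by (simp add: R_def)
  ultimately obtain c where c: "g = (\<Sum>a\<in>R. c a *\<^sub>R a)"
    using span_finite by blast
  then have gc: "g = (\<Sum>i\<in>\<Gamma>. c (A$i) *\<^sub>R A$i)"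
    unfolding R_def using sum.reindex[OF inj] by (simp add: o_def)
  define u where "u = (\<chi> i. if i \<in> \<Gamma> then - c (A$i) else 0)"
  have tu: "transpose A *v u = - g"
  proof -
    have "transpose A *v u = (\<Sum>i\<in>UNIV. u$i *\<^sub>R A$i)" by (rule transpose_mv_sum)
    also have "\<dots> = (\<Sum>i\<in>UNIV. if i \<in> \<Gamma> then - (c (A$i) *\<^sub>R A$i) else 0)"
      by (rule sum.cong) (auto simp: u_def)
    also have "\<dots> = (\<Sum>i\<in>\<Gamma>. - (c (A$i) *\<^sub>R A$i))"
      by (simp add: sum.If_cases)
    also have "\<dots> = - g" by (simp add: gc sum_negf)
    finally show ?thesis .
  qed
  have nn: "u $ j \<ge> 0" if j: "j \<in> \<Gamma>" for j
  proof -
    define R' where "R' = (\<lambda>i. A$i) ` (\<Gamma> - {j})"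
    have "R - {A$j} = R'" using inj j by (auto simp: R_def R'_def inj_on_def)
    moreover have "A$j \<in> R" using j by (simp add: R_def)
    ultimately have nsp: "A$j \<notin> span R'" using ind dependent_def by metis
    obtain p z where p: "p \<in> span R'" and z: "\<And>u. u \<in> span R' \<Longrightarrow> orthogonal z u"
        and apz: "A$j = p + z"
      by (rule orthogonal_subspace_decomp_exists[of R' "A$j"]) blast
    have "z \<noteq> 0" using apz p nsp by auto
    then have zz: "z \<bullet> z > 0" by simp
    have pz: "p \<bullet> z = 0" using z[OF p] by (metis orthogonal_def inner_commute)
    have wi: "A$i \<bullet> (-z) = (if i = j then - (z \<bullet> z) else 0)" if "i \<in> \<Gamma>" for i
    proof (cases "i = j")
      case True
      then show ?thesis using apz pz by (simp add: inner_add_left)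
    next
      case False
      then have "A$i \<in> span R'" using that by (auto simp: R'_def intro: span_base)
      then have "A$i \<bullet> z = 0" using z by (metis orthogonal_def inner_commute)
      then show ?thesis using False by simp
    qed
    have "g \<bullet> (-z) \<ge> 0" using wi by (intro C) auto
    moreover have "g \<bullet> (-z) = - (u \<bullet> (A *v (-z)))"
      using transpose_mv_inner[of A u "-z"] tu by simp
    moreover have "u \<bullet> (A *v (-z)) = (\<Sum>i\<in>UNIV. if i = j then u$j * (-(z \<bullet> z)) else 0)"
    proof -
      have ti: "u$i * (A *v (-z))$i = (if i = j then u$j * (-(z \<bullet> z)) else 0)" for i
      proof (cases "i \<in> \<Gamma>")
        case True
        then show ?thesis using wi[of i] by (auto simp: matrix_vector_mul_component)
      next
        case False
        then show ?thesis using j by (auto simp: u_def)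
      qed
      show ?thesis unfolding inner_vec_def[of u] inner_real_def by (rule sum.cong[OF refl]) (rule ti)
    qed
    ultimately have "u$j * (z \<bullet> z) \<ge> 0" by simp
    then show ?thesis using zz by (simp add: zero_le_mult_iff)
  qed
  have "u \<in> subdiff_l0pos (A *v xs + b)"
    unfolding subdiff_l0pos_def using nn by (auto simp: u_def G Y_def)
  then show ?thesis using tu by (intro image_eqI[of _ _ u]) auto
qed


theorem lemma3p1:
  fixes f :: "real^'n \<Rightarrow> real" and lam :: real
    and A :: "real^'n^'m" and b :: "real^'m" and xs :: "real^'n"
  assumes "twice_cont_diff f" and "lam > 0"
  shows "(local_minimizer (objP f lam A b) xs \<and> full_row_rank A (active_set A b xs)
            \<longrightarrow> - gradient f xs \<in> (\<lambda>v. transpose A *v v) ` subdiff_l0pos (A *v xs + b))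
       \<and> (- gradient f xs \<in> (\<lambda>v. transpose A *v v) ` subdiff_l0pos (A *v xs + b)
            \<and> (\<exists>d>0. convex_on (ball xs d) f)
            \<longrightarrow> local_minimizer (objP f lam A b) xs)"
proof -
  have diff: "\<forall>x. f differentiable (at x)" using assms(1) by (simp add: twice_cont_diff_def)
  have der: "(f has_derivative (\<lambda>h. gradient f xs \<bullet> h)) (at xs)"
    using gradient_works diff by blast
  show ?thesis
  proof (intro conjI impI)
    assume "local_minimizer (objP f lam A b) xs \<and> full_row_rank A (active_set A b xs)"
    then show "- gradient f xs \<in> (\<lambda>v. transpose A *v v) ` subdiff_l0pos (A *v xs + b)"
      using part1[OF der _ assms(2)] by blast
  next
    assume h: "- gradient f xs \<in> (\<lambda>v. transpose A *v v) ` subdiff_l0pos (A *v xs + b)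
            \<and> (\<exists>d>0. convex_on (ball xs d) f)"
    then obtain v d where "v \<in> subdiff_l0pos (A *v xs + b)" "- gradient f xs = transpose A *v v"
      "d > 0" "convex_on (ball xs d) f" by blast
    then show "local_minimizer (objP f lam A b) xs"
      using part2[OF diff assms(2)] by blast
  qed
qed

end
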